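(* Let $n\ge1$. If $\{H_1,H_2,H_3\}$ is a Hamilton decomposition of $G_{n,3}$ and $\{E_1,\dots,E_n\}$ is a Hamilton decomposition of $Q_{2n}$ (each $E_i$ a directed Hamilton cycle starting at $\mathbf 0$), then $\{g(E_i,H_j):1\le i\le n,\ 1\le j\le3\}$ is a Hamilton decomposition of $Q_{6n}$.
   Context: A Hamilton decomposition is a partition of the edge set into edge-disjoint Hamilton cycles. $Q_{2n}$ is realized on quaternary strings $q_1\cdots q_n$, adjacent iff they differ in exactly one position by $\pm1\pmod4$; $\mathbf 0=0\cdots0$. $G_{n,3}$ has vertex set $(\mathbb Z/4^n\mathbb Z)^3$, adjacency: differ in exactly one coordinate by $\pm1\pmod{4^n}$. For a directed Hamilton cycle $E$ of $Q_{2n}$ listing $e_0=\mathbf 0,\dots,e_{4^n-1}$, $\pi_E(e_p)=p$. Identify $V(Q_{6n})$ with triples $(u,w,t)$ of quaternary strings of length $n$ and set $\Psi_E(u,w,t)=(\pi_E(u),\pi_E(w),\pi_E(t))$; for a Hamilton cycle $H$ of $G_{n,3}$, $g(E,H):=\Psi_E^{-1}(H)$. *)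

theory Defs
  imports Main
begin

text \<open>The list order also fixes a direction and a starting vertex.\<close>

definition ham_cycle :: "'a set \<Rightarrow> ('a \<Rightarrow> 'a \<Rightarrow> bool) \<Rightarrow> 'a list \<Rightarrow> bool" where
  "ham_cycle V adj c \<longleftrightarrow> 3 \<le> length c \<and> distinct c \<and> set c = V \<and>
     (\<forall>k < length c. adj (c ! k) (c ! ((k + 1) mod length c)))"

definition cycle_edges :: "'a list \<Rightarrow> 'a set set" where
  "cycle_edges c = {{c ! k, c ! ((k + 1) mod length c)} | k. k < length c}"

definition graph_edges :: "'a set \<Rightarrow> ('a \<Rightarrow> 'a \<Rightarrow> bool) \<Rightarrow> 'a set set" where
  "graph_edges V adj = {{u, v} | u v. u \<in> V \<and> v \<in> V \<and> adj u v}"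

definition ham_decomp :: "'a set \<Rightarrow> ('a \<Rightarrow> 'a \<Rightarrow> bool) \<Rightarrow> 'i set \<Rightarrow> ('i \<Rightarrow> 'a list) \<Rightarrow> bool" where
  "ham_decomp V adj I C \<longleftrightarrow>
     (\<forall>i\<in>I. ham_cycle V adj (C i)) \<and>
     (\<forall>i\<in>I. \<forall>j\<in>I. i \<noteq> j \<longrightarrow> cycle_edges (C i) \<inter> cycle_edges (C j) = {}) \<and>
     (\<Union>i\<in>I. cycle_edges (C i)) = graph_edges V adj"

definition qstrings :: "nat \<Rightarrow> nat list set" where
  "qstrings n = {xs. length xs = n \<and> (\<forall>x\<in>set xs. x < 4)}"

definition zadj :: "nat \<Rightarrow> nat \<Rightarrow> nat \<Rightarrow> bool" where
  "zadj m x y \<longleftrightarrow> (x + 1) mod m = y \<or> (y + 1) mod m = x"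

definition q_adj :: "nat list \<Rightarrow> nat list \<Rightarrow> bool" where
  "q_adj xs ys \<longleftrightarrow> length xs = length ys \<and>
     (\<exists>i < length xs. (\<forall>j < length xs. j \<noteq> i \<longrightarrow> xs ! j = ys ! j) \<and> zadj 4 (xs ! i) (ys ! i))"

text \<open>Q_(2n): vertex set qstrings n, adjacency q_adj.  The all-zero string:\<close>

definition qzero :: "nat \<Rightarrow> nat list" where
  "qzero n = replicate n 0"

definition G_verts :: "nat \<Rightarrow> (nat \<times> nat \<times> nat) set" where
  "G_verts n = {(a, b, c). a < 4 ^ n \<and> b < 4 ^ n \<and> c < 4 ^ n}"

definition G_adj :: "nat \<Rightarrow> nat \<times> nat \<times> nat \<Rightarrow> nat \<times> nat \<times> nat \<Rightarrow> bool" where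
  "G_adj n v w = (case v of (a, b, c) \<Rightarrow> case w of (a', b', c') \<Rightarrow>
      (zadj (4 ^ n) a a' \<and> b = b' \<and> c = c') \<or>
      (a = a' \<and> zadj (4 ^ n) b b' \<and> c = c') \<or>
      (a = a' \<and> b = b' \<and> zadj (4 ^ n) c c'))"

text \<open>For a directed Hamilton cycle E = [e_0, ..., e_(4^n-1)] of Q_(2n) we have
  pi_E(e_p) = p, hence Psi_E^(-1)(p1,p2,p3) = e_p1 e_p2 e_p3 (concatenation, i.e. the
  triple (u,w,t) of strings identified with the string u w t of length 3n).\<close>

definition Psi_inv :: "nat list list \<Rightarrow> nat \<times> nat \<times> nat \<Rightarrow> nat list" where
  "Psi_inv E v = (case v of (a, b, c) \<Rightarrow> E ! a @ E ! b @ E ! c)"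

definition g :: "nat list list \<Rightarrow> (nat \<times> nat \<times> nat) list \<Rightarrow> nat list list" where
  "g E H = map (Psi_inv E) H"

end

theory Submission
  imports Defs
begin

lemma card_qstrings: "card (qstrings n) = 4 ^ n"
proof -
  have "qstrings n = {xs. set xs \<subseteq> {..<4::nat} \<and> length xs = n}"
    by (auto simp: qstrings_def)
  then show ?thesis by (simp add: card_lists_length_eq)
qed

lemma hc_len: "ham_cycle (qstrings n) q_adj c \<Longrightarrow> length c = 4 ^ n"
  unfolding ham_cycle_def using card_qstrings distinct_card by metis

lemma hc_edge: "ham_cycle V adj c \<Longrightarrow> e \<in> cycle_edges c \<Longrightarrow>
   \<exists>a b. e = {a,b} \<and> a\<in>V \<and> b\<in>V \<and> adj a b"
proof -
  assume h: "ham_cycle V adj c" and e: "e \<in> cycle_edges c"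
  then obtain k where k: "k < length c" "e = {c ! k, c ! ((k + 1) mod length c)}"
    unfolding cycle_edges_def by auto
  have "(k + 1) mod length c < length c" using k by (metis less_nat_zero_code mod_less_divisor neq0_conv)
  then show ?thesis using h k unfolding ham_cycle_def by (metis nth_mem)
qed

lemma hc_edges_sub: "ham_cycle V adj c \<Longrightarrow> cycle_edges c \<subseteq> graph_edges V adj"
  unfolding graph_edges_def using hc_edge by blast

lemma cycle_edges_map: "cycle_edges (map f c) = (\<lambda>e. f ` e) ` cycle_edges c"
proof -
  have m: "\<And>k. k<length c \<Longrightarrow> map f c ! (Suc k mod length c) = f (c ! (Suc k mod length c))"
    by (metis less_nat_zero_code mod_less_divisor neq0_conv nth_map)
  have "cycle_edges (map f c) = {{f (c!k), f (c!((k+1) mod length c))} | k. k < length c}"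
    unfolding cycle_edges_def by (intro Collect_cong ex_cong1) (auto simp: m)
  also have "\<dots> = (\<lambda>e. f ` e) ` {{c!k, c!((k+1) mod length c)} | k. k < length c}"
  proof (rule set_eqI, rule iffI)
    fix x assume "x \<in> {{f (c!k), f (c!((k+1) mod length c))} | k. k < length c}"
    then obtain k where "k < length c" "x = {f (c!k), f (c!((k+1) mod length c))}" by blast
    then show "x \<in> (\<lambda>e. f ` e) ` {{c!k, c!((k+1) mod length c)} | k. k < length c}"
      by (intro image_eqI[of _ _ "{c!k, c!((k+1) mod length c)}"]) auto
  qed auto
  finally show ?thesis unfolding cycle_edges_def .
qed

lemma q_adj_sym: "q_adj x y \<Longrightarrow> q_adj y x"
  unfolding q_adj_def zadj_def by metis

lemma q_adj_append2:
  assumes "length a = length a'" "length b = length b'"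
  shows "q_adj (a@b) (a'@b') \<longleftrightarrow> (q_adj a a' \<and> b = b') \<or> (a = a' \<and> q_adj b b')"
proof
  assume "q_adj (a@b) (a'@b')"
  then obtain i where i: "i < length a + length b"
    and eq: "\<And>j. j < length a + length b \<Longrightarrow> j \<noteq> i \<Longrightarrow> (a@b) ! j = (a'@b') ! j"
    and z: "zadj 4 ((a@b)!i) ((a'@b')!i)"
    unfolding q_adj_def by auto
  show "(q_adj a a' \<and> b = b') \<or> (a = a' \<and> q_adj b b')"
  proof (cases "i < length a")
    case True
    have "q_adj a a'" unfolding q_adj_def
    proof (intro conjI exI[of _ i])
      show "length a = length a'" by fact
      show "i < length a" by fact
      show "\<forall>j<length a. j \<noteq> i \<longrightarrow> a ! j = a' ! j"
        using eq assms by (metis nth_append_left trans_less_add1)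
      show "zadj 4 (a ! i) (a' ! i)" using z True assms by (simp add: nth_append)
    qed
    moreover have "b = b'"
    proof (rule nth_equalityI)
      show "length b = length b'" by fact
      fix j assume "j < length b"
      then show "b ! j = b' ! j" using eq[of "j + length a"] True assms by (simp add: nth_append)
    qed
    ultimately show ?thesis by simp
  next
    case False
    have "a = a'"
    proof (rule nth_equalityI)
      show "length a = length a'" by fact
      fix j assume "j < length a"
      then show "a ! j = a' ! j" using eq[of j] False assms by (simp add: nth_append)
    qed
    moreover have "q_adj b b'" unfolding q_adj_def
    proof (intro conjI exI[of _ "i - length a"])
      show "length b = length b'" by fact
      show "i - length a < length b" using i False by simp
      show "\<forall>j<length b. j \<noteq> i - length a \<longrightarrow> b ! j = b' ! j"
      proof (intro allI impI)
        fix j assume "j < length b" "j \<noteq> i - length a"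
        then show "b ! j = b' ! j" using eq[of "j + length a"] False assms by (simp add: nth_append)
      qed
      show "zadj 4 (b ! (i - length a)) (b' ! (i - length a))" using z False assms by (simp add: nth_append)
    qed
    ultimately show ?thesis by simp
  qed
next
  assume "(q_adj a a' \<and> b = b') \<or> (a = a' \<and> q_adj b b')"
  then show "q_adj (a@b) (a'@b')"
  proof
    assume h: "q_adj a a' \<and> b = b'"
    then obtain i where "i < length a" "\<forall>j<length a. j \<noteq> i \<longrightarrow> a ! j = a' ! j" "zadj 4 (a!i) (a'!i)"
      unfolding q_adj_def by auto
    then show ?thesis using h assms unfolding q_adj_def
      by (intro conjI exI[of _ i]) (auto simp: nth_append)
  next
    assume h: "a = a' \<and> q_adj b b'"
    then obtain i where "i < length b" "\<forall>j<length b. j \<noteq> i \<longrightarrow> b ! j = b' ! j" "zadj 4 (b!i) (b'!i)"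
      unfolding q_adj_def by auto
    then show ?thesis using h assms unfolding q_adj_def
      by (intro conjI exI[of _ "i + length a"]) (auto simp: nth_append)
  qed
qed

lemma q_adj_append3:
  assumes "length u = length u'" "length w = length w'" "length t = length t'"
  shows "q_adj (u@w@t) (u'@w'@t') \<longleftrightarrow>
     (q_adj u u' \<and> w = w' \<and> t = t') \<or> (u = u' \<and> q_adj w w' \<and> t = t') \<or> (u = u' \<and> w = w' \<and> q_adj t t')"
  using assms by (simp add: q_adj_append2) blast

lemma zadj_neq: "2 \<le> m \<Longrightarrow> a < m \<Longrightarrow> b < m \<Longrightarrow> zadj m a b \<Longrightarrow> a \<noteq> b"
  unfolding zadj_def by (cases "a + 1 = m") auto

definition blk :: "nat \<Rightarrow> nat \<Rightarrow> nat list \<Rightarrow> nat list" where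
  "blk n k x = take n (drop (k*n) x)"

lemma blk0: "length u = n \<Longrightarrow> blk n 0 (u@w@t) = u"
  by (simp add: blk_def)
lemma blk1: "length u = n \<Longrightarrow> length w = n \<Longrightarrow> blk n 1 (u@w@t) = w"
  by (simp add: blk_def)
lemma blk2: "length u = n \<Longrightarrow> length w = n \<Longrightarrow> length t = n \<Longrightarrow> blk n 2 (u@w@t) = t"
  by (simp add: blk_def)

lemma qlen: "x \<in> qstrings n \<Longrightarrow> length x = n"
  by (simp add: qstrings_def)

lemma q3: "u \<in> qstrings n \<Longrightarrow> w \<in> qstrings n \<Longrightarrow> t \<in> qstrings n \<Longrightarrow> u@w@t \<in> qstrings (3*n)"
  by (auto simp: qstrings_def)

lemma split3: "x \<in> qstrings (3*n) \<Longrightarrow> \<exists>u w t. x = u@w@t \<and> u \<in> qstrings n \<and> w \<in> qstrings n \<and> t \<in> qstrings n"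
proof -
  assume x: "x \<in> qstrings (3*n)"
  let ?u = "take n x" and ?w = "take n (drop n x)" and ?t = "drop (2*n) x"
  have "x = ?u @ ?w @ ?t"
    by (metis append_take_drop_id drop_drop mult_2 add.commute)
  moreover have "?u \<in> qstrings n" "?w \<in> qstrings n" "?t \<in> qstrings n"
    using x by (auto simp: qstrings_def dest: in_set_takeD in_set_dropD)
  ultimately show ?thesis by blast
qed

context
  fixes n :: nat and c :: "nat list list"
  assumes hc: "ham_cycle (qstrings n) q_adj c"
begin

lemma len_c: "length c = 4 ^ n" using hc_len[OF hc] .

lemma c_in: "a < 4 ^ n \<Longrightarrow> c ! a \<in> qstrings n"
  using hc len_c unfolding ham_cycle_def by (metis nth_mem)

lemma c_len: "a < 4 ^ n \<Longrightarrow> length (c ! a) = n"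
  using c_in qlen by blast

lemma c_dist: "a < 4 ^ n \<Longrightarrow> b < 4 ^ n \<Longrightarrow> c ! a = c ! b \<longleftrightarrow> a = b"
  using hc len_c unfolding ham_cycle_def by (simp add: nth_eq_iff_index_eq)

lemma c_idx: "u \<in> qstrings n \<Longrightarrow> \<exists>a < 4 ^ n. u = c ! a"
  using hc len_c unfolding ham_cycle_def by (metis in_set_conv_nth)

lemma cyc_edge: "a < 4^n \<Longrightarrow> b < 4^n \<Longrightarrow> zadj (4^n) a b \<Longrightarrow> {c!a, c!b} \<in> cycle_edges c"
  unfolding zadj_def cycle_edges_def using len_c
  by (auto simp: insert_commute)

lemma cyc_adj: "a < 4^n \<Longrightarrow> b < 4^n \<Longrightarrow> zadj (4^n) a b \<Longrightarrow> q_adj (c!a) (c!b)"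
proof -
  assume a: "a < 4^n" and b: "b < 4^n" and z: "zadj (4^n) a b"
  have adj: "\<And>k. k < 4^n \<Longrightarrow> q_adj (c ! k) (c ! ((k + 1) mod 4^n))"
    using hc len_c unfolding ham_cycle_def by auto
  from z show ?thesis unfolding zadj_def
  proof
    assume "(a + 1) mod 4 ^ n = b" then show ?thesis using adj[OF a] by simp
  next
    assume "(b + 1) mod 4 ^ n = a" then show ?thesis using adj[OF b] q_adj_sym by simp
  qed
qed

lemma psi_inj: "inj_on (Psi_inv c) (G_verts n)"
proof (rule inj_onI)
  fix v w assume v: "v \<in> G_verts n" and w: "w \<in> G_verts n" and eq: "Psi_inv c v = Psi_inv c w"
  obtain a b d where vv: "v = (a,b,d)" by (cases v) auto
  obtain a' b' d' where ww: "w = (a',b',d')" by (cases w) auto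
  have r: "a < 4^n" "b < 4^n" "d < 4^n" "a' < 4^n" "b' < 4^n" "d' < 4^n"
    using v w vv ww by (auto simp: G_verts_def)
  have "c!a @ c!b @ c!d = c!a' @ c!b' @ c!d'" using eq vv ww by (simp add: Psi_inv_def)
  then have "c!a = c!a' \<and> c!b = c!b' \<and> c!d = c!d'"
    using r c_len by (simp add: append_eq_append_conv)
  then show "v = w" using r c_dist vv ww by simp
qed

lemma psi_img: "Psi_inv c ` G_verts n = qstrings (3*n)"
proof
  show "Psi_inv c ` G_verts n \<subseteq> qstrings (3*n)"
    by (auto simp: G_verts_def Psi_inv_def intro!: q3 c_in)
next
  show "qstrings (3*n) \<subseteq> Psi_inv c ` G_verts n"
  proof
    fix x assume "x \<in> qstrings (3*n)"
    then obtain u w t where x: "x = u@w@t" "u \<in> qstrings n" "w \<in> qstrings n" "t \<in> qstrings n"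
      using split3 by blast
    obtain a b d where "a < 4^n" "b < 4^n" "d < 4^n" "u = c!a" "w = c!b" "t = c!d"
      using c_idx x by metis
    then show "x \<in> Psi_inv c ` G_verts n"
      using x by (auto simp: G_verts_def Psi_inv_def image_iff intro!: exI[of _ "(a,b,d)"])
  qed
qed

lemma psi_adj: "v \<in> G_verts n \<Longrightarrow> w \<in> G_verts n \<Longrightarrow> G_adj n v w \<Longrightarrow> q_adj (Psi_inv c v) (Psi_inv c w)"
proof -
  assume v: "v \<in> G_verts n" and w: "w \<in> G_verts n" and adj: "G_adj n v w"
  obtain a b d where vv: "v = (a,b,d)" by (cases v) auto
  obtain a' b' d' where ww: "w = (a',b',d')" by (cases w) auto
  have r: "a < 4^n" "b < 4^n" "d < 4^n" "a' < 4^n" "b' < 4^n" "d' < 4^n"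
    using v w vv ww by (auto simp: G_verts_def)
  have P: "Psi_inv c v = c!a @ c!b @ c!d" "Psi_inv c w = c!a' @ c!b' @ c!d'"
    using vv ww by (simp_all add: Psi_inv_def)
  have eq: "q_adj (Psi_inv c v) (Psi_inv c w) \<longleftrightarrow>
     (q_adj (c!a) (c!a') \<and> c!b = c!b' \<and> c!d = c!d') \<or> (c!a = c!a' \<and> q_adj (c!b) (c!b') \<and> c!d = c!d')
      \<or> (c!a = c!a' \<and> c!b = c!b' \<and> q_adj (c!d) (c!d'))"
    unfolding P using r by (intro q_adj_append3) (simp_all add: c_len)
  from adj vv ww have "(zadj (4 ^ n) a a' \<and> b = b' \<and> d = d') \<or>
      (a = a' \<and> zadj (4 ^ n) b b' \<and> d = d') \<or> (a = a' \<and> b = b' \<and> zadj (4 ^ n) d d')"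
    by (simp add: G_adj_def)
  then show ?thesis unfolding eq using r cyc_adj by blast
qed

lemma key: "1 \<le> n \<Longrightarrow> v \<in> G_verts n \<Longrightarrow> w \<in> G_verts n \<Longrightarrow> G_adj n v w \<Longrightarrow>
  \<exists>k<3. {blk n k (Psi_inv c v), blk n k (Psi_inv c w)} \<in> cycle_edges c \<and>
        blk n k (Psi_inv c v) \<noteq> blk n k (Psi_inv c w) \<and>
        (\<forall>k'<3. k' \<noteq> k \<longrightarrow> blk n k' (Psi_inv c v) = blk n k' (Psi_inv c w))"
proof -
  assume n1: "1 \<le> n" and v: "v \<in> G_verts n" and w: "w \<in> G_verts n" and adj: "G_adj n v w"
  obtain a b d where vv: "v = (a,b,d)" by (cases v) auto
  obtain a' b' d' where ww: "w = (a',b',d')" by (cases w) auto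
  have r: "a < 4^n" "b < 4^n" "d < 4^n" "a' < 4^n" "b' < 4^n" "d' < 4^n"
    using v w vv ww by (auto simp: G_verts_def)
  have two: "2 \<le> (4::nat)^n" if "1 \<le> n" using that
    using power_increasing[OF that, of "4::nat"] by simp
  have ne: "\<And>p q. p < 4^n \<Longrightarrow> q < 4^n \<Longrightarrow> zadj (4^n) p q \<Longrightarrow> c!p \<noteq> c!q"
  proof -
    fix p q assume p: "p < (4::nat)^n" and q: "q < 4^n" and z: "zadj (4^n) p q"
    have "p \<noteq> q" using zadj_neq[OF two[OF n1] p q z] .
    then show "c!p \<noteq> c!q" using c_dist p q by simp
  qed
  have L: "length (c!a) = n" "length (c!b) = n" "length (c!d) = n"
     "length (c!a') = n" "length (c!b') = n" "length (c!d') = n"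
    using r c_len by auto
  have P: "Psi_inv c v = c!a @ c!b @ c!d" "Psi_inv c w = c!a' @ c!b' @ c!d'"
    using vv ww by (simp_all add: Psi_inv_def)
  have B: "blk n 0 (Psi_inv c v) = c!a" "blk n 1 (Psi_inv c v) = c!b" "blk n 2 (Psi_inv c v) = c!d"
       "blk n 0 (Psi_inv c w) = c!a'" "blk n 1 (Psi_inv c w) = c!b'" "blk n 2 (Psi_inv c w) = c!d'"
    using P L blk0 blk1 blk2 by auto
  from adj vv ww have "(zadj (4 ^ n) a a' \<and> b = b' \<and> d = d') \<or>
      (a = a' \<and> zadj (4 ^ n) b b' \<and> d = d') \<or> (a = a' \<and> b = b' \<and> zadj (4 ^ n) d d')"
    by (simp add: G_adj_def)
  then show ?thesis
  proof (elim disjE conjE)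
    assume z: "zadj (4 ^ n) a a'" and e: "b = b'" "d = d'"
    have "\<forall>k'<3. k' \<noteq> (0::nat) \<longrightarrow> blk n k' (Psi_inv c v) = blk n k' (Psi_inv c w)"
    proof (intro allI impI)
      fix k' :: nat assume "k' < 3" "k' \<noteq> 0"
      then have "k' = 1 \<or> k' = 2" by auto
      then show "blk n k' (Psi_inv c v) = blk n k' (Psi_inv c w)" by (elim disjE; simp only: B e)
    qed
    moreover have "{blk n 0 (Psi_inv c v), blk n 0 (Psi_inv c w)} \<in> cycle_edges c"
      unfolding B using cyc_edge r z by simp
    moreover have "blk n 0 (Psi_inv c v) \<noteq> blk n 0 (Psi_inv c w)"
      unfolding B using ne r z by simp
    ultimately show ?thesis by (intro exI[of _ 0]) simp
  next
    assume z: "zadj (4 ^ n) b b'" and e: "a = a'" "d = d'"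
    have "\<forall>k'<3. k' \<noteq> (1::nat) \<longrightarrow> blk n k' (Psi_inv c v) = blk n k' (Psi_inv c w)"
    proof (intro allI impI)
      fix k' :: nat assume "k' < 3" "k' \<noteq> 1"
      then have "k' = 0 \<or> k' = 2" by auto
      then show "blk n k' (Psi_inv c v) = blk n k' (Psi_inv c w)" by (elim disjE; simp only: B e)
    qed
    moreover have "{blk n 1 (Psi_inv c v), blk n 1 (Psi_inv c w)} \<in> cycle_edges c"
      unfolding B using cyc_edge r z by simp
    moreover have "blk n 1 (Psi_inv c v) \<noteq> blk n 1 (Psi_inv c w)"
      unfolding B using ne r z by simp
    ultimately show ?thesis by (intro exI[of _ 1]) simp
  next
    assume z: "zadj (4 ^ n) d d'" and e: "a = a'" "b = b'"
    have "\<forall>k'<3. k' \<noteq> (2::nat) \<longrightarrow> blk n k' (Psi_inv c v) = blk n k' (Psi_inv c w)"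
    proof (intro allI impI)
      fix k' :: nat assume "k' < 3" "k' \<noteq> 2"
      then have "k' = 0 \<or> k' = 1" by auto
      then show "blk n k' (Psi_inv c v) = blk n k' (Psi_inv c w)" by (elim disjE; simp only: B e)
    qed
    moreover have "{blk n 2 (Psi_inv c v), blk n 2 (Psi_inv c w)} \<in> cycle_edges c"
      unfolding B using cyc_edge r z by simp
    moreover have "blk n 2 (Psi_inv c v) \<noteq> blk n 2 (Psi_inv c w)"
      unfolding B using ne r z by simp
    ultimately show ?thesis by (intro exI[of _ 2]) simp
  qed
qed

end


lemma qgraph_edge: "e \<in> graph_edges V adj \<Longrightarrow> \<exists>x y. e = {x,y} \<and> x \<in> V \<and> y \<in> V \<and> adj x y"
  unfolding graph_edges_def by blast

theorem corollary2:
  fixes n :: nat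
    and H :: "nat \<Rightarrow> (nat \<times> nat \<times> nat) list"
    and E :: "nat \<Rightarrow> nat list list"
  assumes "1 \<le> n"
    and "ham_decomp (G_verts n) (G_adj n) {1..3} H"
    and "ham_decomp (qstrings n) q_adj {1..n} E"
    and "\<forall>i\<in>{1..n}. hd (E i) = qzero n"
  shows "ham_decomp (qstrings (3 * n)) q_adj ({1..n} \<times> {1..3})
           (\<lambda>(i, j). g (E i) (H j))"
proof -
  note n1 = assms(1)
  have Hc: "\<And>j. j\<in>{1..3} \<Longrightarrow> ham_cycle (G_verts n) (G_adj n) (H j)"
    and Hd: "\<And>j j'. j\<in>{1..3} \<Longrightarrow> j'\<in>{1..3} \<Longrightarrow> j \<noteq> j' \<Longrightarrow> cycle_edges (H j) \<inter> cycle_edges (H j') = {}"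
    and Hu: "(\<Union>j\<in>{1..3}. cycle_edges (H j)) = graph_edges (G_verts n) (G_adj n)"
    using assms(2) unfolding ham_decomp_def by auto
  have Ec: "\<And>i. i\<in>{1..n} \<Longrightarrow> ham_cycle (qstrings n) q_adj (E i)"
    and Ed: "\<And>i i'. i\<in>{1..n} \<Longrightarrow> i'\<in>{1..n} \<Longrightarrow> i \<noteq> i' \<Longrightarrow> cycle_edges (E i) \<inter> cycle_edges (E i') = {}"
    and Eu: "(\<Union>i\<in>{1..n}. cycle_edges (E i)) = graph_edges (qstrings n) q_adj"
    using assms(3) unfolding ham_decomp_def by auto
  have CE: "\<And>i j. cycle_edges (g (E i) (H j)) = (\<lambda>e. Psi_inv (E i) ` e) ` cycle_edges (H j)"
    by (simp add: g_def cycle_edges_map)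

  have cyc: "\<forall>ij\<in>{1..n} \<times> {1..3}. ham_cycle (qstrings (3 * n)) q_adj ((\<lambda>(i, j). g (E i) (H j)) ij)"
  proof
    fix ij :: "nat \<times> nat" assume "ij \<in> {1..n} \<times> {1..3}"
    then obtain i j :: nat where ij: "ij = (i,j)" "i \<in> {1..n}" "j \<in> {1..3}" by auto
    note hE = Ec[OF ij(2)] and hH = Hc[OF ij(3)]
    have "ham_cycle (qstrings (3 * n)) q_adj (map (Psi_inv (E i)) (H j))"
      unfolding ham_cycle_def
    proof (intro conjI allI impI)
      show "3 \<le> length (map (Psi_inv (E i)) (H j))" using hH by (simp add: ham_cycle_def)
      have "inj_on (Psi_inv (E i)) (set (H j))" using hH psi_inj[OF hE] by (simp add: ham_cycle_def)
      then show "distinct (map (Psi_inv (E i)) (H j))" using hH by (simp add: ham_cycle_def distinct_map)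
      show "set (map (Psi_inv (E i)) (H j)) = qstrings (3 * n)" using hH psi_img[OF hE] by (simp add: ham_cycle_def)
      fix k assume k: "k < length (map (Psi_inv (E i)) (H j))"
      let ?L = "length (H j)"
      have k2: "(k+1) mod ?L < ?L" using k by (metis length_map less_nat_zero_code mod_less_divisor neq0_conv)
      have "H j ! k \<in> G_verts n" "H j ! ((k+1) mod ?L) \<in> G_verts n" "G_adj n (H j ! k) (H j ! ((k+1) mod ?L))"
        using hH k k2 unfolding ham_cycle_def by (auto dest: nth_mem)
      then show "q_adj (map (Psi_inv (E i)) (H j) ! k)
          (map (Psi_inv (E i)) (H j) ! ((k + 1) mod length (map (Psi_inv (E i)) (H j))))"
        using psi_adj[OF hE] k k2 by simp
    qed
    then show "ham_cycle (qstrings (3 * n)) q_adj ((\<lambda>(i, j). g (E i) (H j)) ij)"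
      using ij by (simp add: g_def)
  qed

  have disj: "\<forall>a\<in>{1..n} \<times> {1..3}. \<forall>b\<in>{1..n} \<times> {1..3}. a \<noteq> b \<longrightarrow>
      cycle_edges ((\<lambda>(i, j). g (E i) (H j)) a) \<inter> cycle_edges ((\<lambda>(i, j). g (E i) (H j)) b) = {}"
  proof (intro ballI impI)
    fix a b :: "nat \<times> nat" assume a: "a \<in> {1..n} \<times> {1..3}" and b: "b \<in> {1..n} \<times> {1..3}" and neq: "a \<noteq> b"
    obtain i j :: nat where ij: "a = (i,j)" "i \<in> {1..n}" "j \<in> {1..3}" using a by auto
    obtain i' j' :: nat where ij': "b = (i',j')" "i' \<in> {1..n}" "j' \<in> {1..3}" using b by auto
    note hE = Ec[OF ij(2)] and hE' = Ec[OF ij'(2)]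
    show "cycle_edges ((\<lambda>(i, j). g (E i) (H j)) a) \<inter> cycle_edges ((\<lambda>(i, j). g (E i) (H j)) b) = {}"
    proof (rule ccontr)
      assume "cycle_edges ((\<lambda>(i, j). g (E i) (H j)) a) \<inter> cycle_edges ((\<lambda>(i, j). g (E i) (H j)) b) \<noteq> {}"
      then obtain e where e1: "e \<in> cycle_edges (g (E i) (H j))" and e2: "e \<in> cycle_edges (g (E i') (H j'))"
        using ij ij' by auto
      from e1 obtain f where f: "f \<in> cycle_edges (H j)" "e = Psi_inv (E i) ` f" unfolding CE by auto
      from e2 obtain f' where f': "f' \<in> cycle_edges (H j')" "e = Psi_inv (E i') ` f'" unfolding CE by auto
      obtain v w where vw: "f = {v,w}" "v \<in> G_verts n" "w \<in> G_verts n" "G_adj n v w"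
        using hc_edge[OF Hc[OF ij(3)] f(1)] by blast
      obtain v' w' where vw': "f' = {v',w'}" "v' \<in> G_verts n" "w' \<in> G_verts n" "G_adj n v' w'"
        using hc_edge[OF Hc[OF ij'(3)] f'(1)] by blast
      show False
      proof (cases "i = i'")
        case True
        then have "j \<noteq> j'" using neq ij ij' by auto
        have "Psi_inv (E i) ` f = Psi_inv (E i) ` f'" using f f' True by simp
        moreover have "f \<subseteq> G_verts n" "f' \<subseteq> G_verts n" using vw vw' by auto
        ultimately have "f = f'" using inj_on_image_eq_iff[OF psi_inj[OF hE]] by blast
        then show False using Hd[OF ij(3) ij'(3) \<open>j \<noteq> j'\<close>] f f' by auto
      next
        case False
        let ?X = "Psi_inv (E i) v" and ?Y = "Psi_inv (E i) w"
        let ?X' = "Psi_inv (E i') v'" and ?Y' = "Psi_inv (E i') w'"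
        obtain k where k: "k < 3" "{blk n k ?X, blk n k ?Y} \<in> cycle_edges (E i)"
          "blk n k ?X \<noteq> blk n k ?Y" "\<forall>k'<3. k' \<noteq> k \<longrightarrow> blk n k' ?X = blk n k' ?Y"
          using key[OF hE n1 vw(2,3,4)] by blast
        obtain k' where k': "k' < 3" "{blk n k' ?X', blk n k' ?Y'} \<in> cycle_edges (E i')"
          "blk n k' ?X' \<noteq> blk n k' ?Y'" "\<forall>k''<3. k'' \<noteq> k' \<longrightarrow> blk n k'' ?X' = blk n k'' ?Y'"
          using key[OF hE' n1 vw'(2,3,4)] by blast
        have xy: "{?X, ?Y} = {?X', ?Y'}" using f f' vw vw' by simp
        then have xy2: "(?X = ?X' \<and> ?Y = ?Y') \<or> (?X = ?Y' \<and> ?Y = ?X')" by (simp add: doubleton_eq_iff)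
        have "k = k'"
        proof (rule ccontr)
          assume "k \<noteq> k'"
          then have "blk n k ?X' = blk n k ?Y'" using k'(4) k(1) by blast
          then show False using xy2 k(3) by auto
        qed
        then have "{blk n k ?X, blk n k ?Y} = {blk n k ?X', blk n k ?Y'}" using xy2 by auto
        then show False using Ed[OF ij(2) ij'(2) False] k(2) k'(2) \<open>k = k'\<close> by auto
      qed
    qed
  qed

  have union: "(\<Union>a\<in>{1..n} \<times> {1..3}. cycle_edges ((\<lambda>(i, j). g (E i) (H j)) a)) = graph_edges (qstrings (3 * n)) q_adj"
  proof
    show "(\<Union>a\<in>{1..n} \<times> {1..3}. cycle_edges ((\<lambda>(i, j). g (E i) (H j)) a)) \<subseteq> graph_edges (qstrings (3 * n)) q_adj"
      using cyc hc_edges_sub by blast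
  next
    have lift: "\<And>i v v'. i\<in>{1..n} \<Longrightarrow> v\<in>G_verts n \<Longrightarrow> v'\<in>G_verts n \<Longrightarrow> G_adj n v v' \<Longrightarrow>
       Psi_inv (E i) ` {v,v'} \<in> (\<Union>a\<in>{1..n} \<times> {1..3}. cycle_edges ((\<lambda>(i, j). g (E i) (H j)) a))"
    proof -
      fix i v v' assume i: "i\<in>{1..n}" and v: "v\<in>G_verts n" "v'\<in>G_verts n" "G_adj n v v'"
      have "{v,v'} \<in> graph_edges (G_verts n) (G_adj n)" using v unfolding graph_edges_def by blast
      then obtain j where j: "j \<in> {1..3}" "{v,v'} \<in> cycle_edges (H j)" using Hu by blast
      then have "Psi_inv (E i) ` {v,v'} \<in> cycle_edges (g (E i) (H j))" unfolding CE by blast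
      then show "Psi_inv (E i) ` {v,v'} \<in> (\<Union>a\<in>{1..n} \<times> {1..3}. cycle_edges ((\<lambda>(i, j). g (E i) (H j)) a))"
        using i j by force
    qed
    have Eedge: "\<And>u u'. q_adj u u' \<Longrightarrow> u \<in> qstrings n \<Longrightarrow> u' \<in> qstrings n \<Longrightarrow>
       \<exists>i\<in>{1..n}. \<exists>p < 4^n. {u,u'} = {E i ! p, E i ! ((p+1) mod 4^n)}"
    proof -
      fix u u' assume "q_adj u u'" "u \<in> qstrings n" "u' \<in> qstrings n"
      then have "{u,u'} \<in> graph_edges (qstrings n) q_adj" unfolding graph_edges_def by blast
      then obtain i where i: "i \<in> {1..n}" "{u,u'} \<in> cycle_edges (E i)" using Eu by blast
      from i(2) obtain k where k: "k < length (E i)" "{u,u'} = {E i!k, E i!((k+1) mod length (E i))}"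
        unfolding cycle_edges_def by blast
      then show "\<exists>i\<in>{1..n}. \<exists>p < 4^n. {u,u'} = {E i ! p, E i ! ((p+1) mod 4^n)}"
        using i(1) len_c[OF Ec[OF i(1)]] by (intro bexI[of _ i] exI[of _ k]) auto
    qed
    have zs: "\<And>p::nat. zadj (4^n) p (Suc p mod 4^n)" by (simp add: zadj_def)
    have ms: "\<And>p::nat. (p+1) mod 4^n < 4^n" by simp
    show "graph_edges (qstrings (3 * n)) q_adj \<subseteq> (\<Union>a\<in>{1..n} \<times> {1..3}. cycle_edges ((\<lambda>(i, j). g (E i) (H j)) a))"
    proof
      fix e assume "e \<in> graph_edges (qstrings (3 * n)) q_adj"
      then obtain x y where xy: "e = {x,y}" "x \<in> qstrings (3*n)" "y \<in> qstrings (3*n)" "q_adj x y"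
        using qgraph_edge by blast
      obtain u w t where x: "x = u@w@t" "u \<in> qstrings n" "w \<in> qstrings n" "t \<in> qstrings n"
        using split3[OF xy(2)] by blast
      obtain u' w' t' where y: "y = u'@w'@t'" "u' \<in> qstrings n" "w' \<in> qstrings n" "t' \<in> qstrings n"
        using split3[OF xy(3)] by blast
      have "(q_adj u u' \<and> w = w' \<and> t = t') \<or> (u = u' \<and> q_adj w w' \<and> t = t') \<or> (u = u' \<and> w = w' \<and> q_adj t t')"
        using xy(4) x y q_adj_append3[of u u' w w' t t'] by (simp add: qlen)
      then show "e \<in> (\<Union>a\<in>{1..n} \<times> {1..3}. cycle_edges ((\<lambda>(i, j). g (E i) (H j)) a))"
      proof (elim disjE conjE)
        assume h: "q_adj u u'" "w = w'" "t = t'"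
        obtain i p where ip: "i \<in> {1..n}" "p < 4^n" "{u,u'} = {E i ! p, E i ! ((p+1) mod 4^n)}"
          using Eedge[OF h(1) x(2) y(2)] by blast
        obtain b where b: "b < 4^n" "w = E i ! b" using c_idx[OF Ec[OF ip(1)] x(3)] by blast
        obtain d where d: "d < 4^n" "t = E i ! d" using c_idx[OF Ec[OF ip(1)] x(4)] by blast
        have "Psi_inv (E i) ` {(p,b,d), ((p+1) mod 4^n,b,d)} \<in> (\<Union>a\<in>{1..n} \<times> {1..3}. cycle_edges ((\<lambda>(i, j). g (E i) (H j)) a))"
          using ip b d by (intro lift) (auto simp: G_verts_def G_adj_def zs)
        moreover have "Psi_inv (E i) ` {(p,b,d), ((p+1) mod 4^n,b,d)} = e"
          using ip(3) xy(1) x(1) y(1) h b d by (auto simp: Psi_inv_def doubleton_eq_iff)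
        ultimately show ?thesis by simp
      next
        assume h: "q_adj w w'" "u = u'" "t = t'"
        obtain i p where ip: "i \<in> {1..n}" "p < 4^n" "{w,w'} = {E i ! p, E i ! ((p+1) mod 4^n)}"
          using Eedge[OF h(1) x(3) y(3)] by blast
        obtain b where b: "b < 4^n" "u = E i ! b" using c_idx[OF Ec[OF ip(1)] x(2)] by blast
        obtain d where d: "d < 4^n" "t = E i ! d" using c_idx[OF Ec[OF ip(1)] x(4)] by blast
        have "Psi_inv (E i) ` {(b,p,d), (b,(p+1) mod 4^n,d)} \<in> (\<Union>a\<in>{1..n} \<times> {1..3}. cycle_edges ((\<lambda>(i, j). g (E i) (H j)) a))"
          using ip b d by (intro lift) (auto simp: G_verts_def G_adj_def zs)
        moreover have "Psi_inv (E i) ` {(b,p,d), (b,(p+1) mod 4^n,d)} = e"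
          using ip(3) xy(1) x(1) y(1) h b d by (auto simp: Psi_inv_def doubleton_eq_iff)
        ultimately show ?thesis by simp
      next
        assume h: "q_adj t t'" "u = u'" "w = w'"
        obtain i p where ip: "i \<in> {1..n}" "p < 4^n" "{t,t'} = {E i ! p, E i ! ((p+1) mod 4^n)}"
          using Eedge[OF h(1) x(4) y(4)] by blast
        obtain b where b: "b < 4^n" "u = E i ! b" using c_idx[OF Ec[OF ip(1)] x(2)] by blast
        obtain d where d: "d < 4^n" "w = E i ! d" using c_idx[OF Ec[OF ip(1)] x(3)] by blast
        have "Psi_inv (E i) ` {(b,d,p), (b,d,(p+1) mod 4^n)} \<in> (\<Union>a\<in>{1..n} \<times> {1..3}. cycle_edges ((\<lambda>(i, j). g (E i) (H j)) a))"
          using ip b d by (intro lift) (auto simp: G_verts_def G_adj_def zs)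
        moreover have "Psi_inv (E i) ` {(b,d,p), (b,d,(p+1) mod 4^n)} = e"
          using ip(3) xy(1) x(1) y(1) h b d by (auto simp: Psi_inv_def doubleton_eq_iff)
        ultimately show ?thesis by simp
      qed
    qed
  qed
  show ?thesis unfolding ham_decomp_def using cyc disj union by blast
qed

end
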